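(* For any $1 \leq i \neq j \leq r$ and $1 \leq s \leq l$, the graph with vertex set $V_i \cup V_j$ whose edges are the edges of $\mathcal{H}(V_i,V_j)$ of color $m_s$ contains no $K_{2,2}$ (4-cycle).
   Context: Let $r \geq 2$ and $l \geq 1$ be integers and $q$ a power of an odd prime. Let $\alpha_1, \dots, \alpha_r$ be distinct elements of $\mathbb{F}_q$, and let $m_1, \dots, m_l$ be distinct elements of $\mathbb{F}_q^* = \mathbb{F}_q\setminus\{0\}$ such that $m_s(\alpha_k - \alpha_i) \neq m_t(\alpha_k - \alpha_j)$ whenever $1 \leq s,t \leq l$ and $i,j,k$ are distinct integers in $\{1,\dots,r\}$. For $1 \leq i \leq r$ let $V_i = \mathbb{F}_q \times \mathbb{F}_q \times \{i\}$. For $x,y \in \mathbb{F}_q$, $a \in \mathbb{F}_q^*$, $s \in \{1,\dots,l\}$ let \[ e(x,y,a,m_s) = \{(x + \alpha_i m_s a,\; y + \alpha_i m_s a^2,\; i) : 1 \leq i \leq r\}. \] $\mathcal{H}$ is the $r$-uniform hypergraph with vertex set $V_1 \cup \dots \cup V_r$ and edge set $\{e(x,y,a,m_s) : x,y \in \mathbb{F}_q,\ a \in \mathbb{F}_q^*,\ 1 \leq s \leq l\}$; it is linear, so any pair of vertices lies in at most one edge of $\mathcal{H}$. For $i \neq j$, $\mathcal{H}(V_i,V_j)$ is the bipartite graph with parts $V_i$ and $V_j$ in which $u \in V_i$ and $w \in V_j$ are adjacent iff $\{u,w\} \subseteq e$ for some edge $e$ of $\mathcal{H}$. An edge $\{u,w\}$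 of $\mathcal{H}(V_i,V_j)$ has color $m_s$ if the (unique) edge $e$ of $\mathcal{H}$ containing $\{u,w\}$ is of the form $e(x,y,a,m_s)$. *)

theory Defs
  imports "HOL-Computational_Algebra.Primes"
begin

text \<open>Vertices of the hypergraph are triples (x, y, i) with x, y in the field and i the part index.\<close>

definition part :: "nat \<Rightarrow> ('a \<times> 'a \<times> nat) set" where
  "part i = UNIV \<times> UNIV \<times> {i}"

definition hedge :: "(nat \<Rightarrow> 'a::field) \<Rightarrow> nat \<Rightarrow> 'a \<Rightarrow> 'a \<Rightarrow> 'a \<Rightarrow> 'a \<Rightarrow> ('a \<times> 'a \<times> nat) set" where
  "hedge \<alpha> r x y a \<mu> = {(x + \<alpha> i * \<mu> * a, y + \<alpha> i * \<mu> * a^2, i) | i. i \<in> {1..r}}"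

definition color_adj :: "(nat \<Rightarrow> 'a::field) \<Rightarrow> nat \<Rightarrow> (nat \<Rightarrow> 'a) \<Rightarrow> nat \<Rightarrow> nat \<Rightarrow> nat
    \<Rightarrow> ('a \<times> 'a \<times> nat) \<Rightarrow> ('a \<times> 'a \<times> nat) \<Rightarrow> bool" where
  "color_adj \<alpha> r m s i j u w \<longleftrightarrow>
     ((u \<in> part i \<and> w \<in> part j) \<or> (u \<in> part j \<and> w \<in> part i)) \<and>
     (\<exists>x y a. a \<noteq> 0 \<and> {u, w} \<subseteq> hedge \<alpha> r x y a (m s))"

end

theory Submission
  imports Defs "HOL-Number_Theory.Residues"
begin

lemma two_nz:
  assumes "\<exists>p k. prime p \<and> odd p \<and> k \<ge> 1 \<and> card (UNIV :: 'a::{field,finite} set) = p ^ k"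
  shows "(2::'a) \<noteq> 0"
proof
  assume h: "(2::'a) = 0"
  have "of_nat 2 = (0::'a)" using h by simp
  hence d: "CHAR('a) dvd 2" using of_nat_eq_0_iff_char_dvd by blast
  have "CHAR('a) \<noteq> 1"
  proof
    assume "CHAR('a) = 1"
    hence "of_nat 1 = (0::'a)" using of_nat_eq_0_iff_char_dvd by (metis dvd_refl)
    thus False by simp
  qed
  moreover have "CHAR('a) \<noteq> 0"
  proof
    assume "CHAR('a) = 0"
    hence "(2::nat) = 0" using d by simp
    thus False by simp
  qed
  moreover have "CHAR('a) \<le> 2" using d by (simp add: dvd_imp_le)
  ultimately have "CHAR('a) = 2" by linarith
  hence "even (card (UNIV::'a set))" using CHAR_dvd_CARD by metis
  moreover obtain p k where "prime (p::nat)" "odd p" "card (UNIV::'a set) = p ^ k" using assms by blast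
  ultimately show False by simp
qed

definition P where
  "P \<alpha> m s i j u w \<longleftrightarrow> snd (snd u) = i \<and> snd (snd w) = j \<and>
     ((\<alpha> j - \<alpha> i) * m s) * (fst (snd w) - fst (snd u)) = (fst w - fst u)^2"

lemma adj_P:
  fixes \<alpha> m :: "nat \<Rightarrow> 'a::field"
  assumes "color_adj \<alpha> r m s i j u w"
  shows "P \<alpha> m s i j u w \<or> P \<alpha> m s i j w u"
proof -
  obtain x y a where a: "a \<noteq> 0" "{u, w} \<subseteq> hedge \<alpha> r x y a (m s)"
    using assms unfolding color_adj_def by blast
  obtain i1 where u: "u = (x + \<alpha> i1 * m s * a, y + \<alpha> i1 * m s * a^2, i1)"
    using a(2) unfolding hedge_def by blast
  obtain i2 where w: "w = (x + \<alpha> i2 * m s * a, y + \<alpha> i2 * m s * a^2, i2)"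
    using a(2) unfolding hedge_def by blast
  have parts: "(i1 = i \<and> i2 = j) \<or> (i1 = j \<and> i2 = i)"
    using assms u w unfolding color_adj_def part_def by auto
  show ?thesis
  proof (cases "i1 = i \<and> i2 = j")
    case True
    have "P \<alpha> m s i j u w" unfolding P_def u w using True
      by (simp add: power2_eq_square algebra_simps)
    thus ?thesis by simp
  next
    case False
    hence "i1 = j \<and> i2 = i" using parts by blast
    hence "P \<alpha> m s i j w u" unfolding P_def u w
      by (simp add: power2_eq_square algebra_simps)
    thus ?thesis by simp
  qed
qed

lemma key:
  fixes c :: "'a::field"
  assumes c: "c \<noteq> 0" and two: "(2::'a) \<noteq> 0"
    and h1: "c * (y - b1) = (x - a1)^2" and h2: "c * (y - b2) = (x - a2)^2"
    and h3: "c * (y' - b1) = (x' - a1)^2" and h4: "c * (y' - b2) = (x' - a2)^2"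
    and ne: "(a1, b1) \<noteq> (a2, b2)"
  shows "x = x' \<and> y = y'"
proof -
  have e1: "c * (b2 - b1) = (a2 - a1) * (2*x - a1 - a2)"
  proof -
    have "c * (b2 - b1) = c * (y - b1) - c * (y - b2)" by (simp add: algebra_simps)
    also have "\<dots> = (x - a1)^2 - (x - a2)^2" using h1 h2 by simp
    also have "\<dots> = (a2 - a1) * (2*x - a1 - a2)" by (simp add: power2_eq_square algebra_simps)
    finally show ?thesis .
  qed
  have e2: "c * (b2 - b1) = (a2 - a1) * (2*x' - a1 - a2)"
  proof -
    have "c * (b2 - b1) = c * (y' - b1) - c * (y' - b2)" by (simp add: algebra_simps)
    also have "\<dots> = (x' - a1)^2 - (x' - a2)^2" using h3 h4 by simp
    also have "\<dots> = (a2 - a1) * (2*x' - a1 - a2)" by (simp add: power2_eq_square algebra_simps)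
    finally show ?thesis .
  qed
  have "a1 \<noteq> a2"
  proof
    assume "a1 = a2"
    hence "c * (b2 - b1) = 0" using e1 by simp
    hence "b1 = b2" using c by simp
    thus False using ne \<open>a1 = a2\<close> by simp
  qed
  hence "a2 - a1 \<noteq> 0" by simp
  hence "2*x - a1 - a2 = 2*x' - a1 - a2" using e1 e2 mult_left_cancel by metis
  hence "2 * x = 2 * x'" by (metis diff_diff_eq diff_left_imp_eq add_right_imp_eq diff_add_cancel)
  hence xx: "x = x'" using two by simp
  hence "c * (y - b1) = c * (y' - b1)" using h1 h3 by simp
  hence "y = y'" using c by simp
  with xx show ?thesis by simp
qed

lemma no_c4:
  fixes \<alpha> m :: "nat \<Rightarrow> 'a::field"
  assumes c: "(\<alpha> j - \<alpha> i) * m s \<noteq> 0" and two: "(2::'a) \<noteq> 0"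
    and "P \<alpha> m s i j u1 w1" "P \<alpha> m s i j u1 w2" "P \<alpha> m s i j u2 w1" "P \<alpha> m s i j u2 w2"
    and "u1 \<noteq> u2"
  shows "w1 = w2"
proof -
  obtain a1 b1 k1 where u1: "u1 = (a1, b1, k1)" by (cases u1) auto
  obtain a2 b2 k2 where u2: "u2 = (a2, b2, k2)" by (cases u2) auto
  obtain x y z where w1: "w1 = (x, y, z)" by (cases w1) auto
  obtain x' y' z' where w2: "w2 = (x', y', z')" by (cases w2) auto
  have "(a1, b1) \<noteq> (a2, b2)" using assms(3-7) u1 u2 unfolding P_def by auto
  hence "x = x' \<and> y = y'"
    using key[OF c two, of y b1 x a1 b2 a2 y' x'] assms(3-6) u1 u2 w1 w2 unfolding P_def by auto
  thus ?thesis using assms(3-6) w1 w2 unfolding P_def by auto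
qed

theorem lemma3p7:
  fixes \<alpha> m :: "nat \<Rightarrow> 'a::{field, finite}" and r l :: nat
  assumes q_odd_prime_power: "\<exists>p k. prime p \<and> odd p \<and> k \<ge> 1 \<and> card (UNIV :: 'a set) = p ^ k"
    and r2: "r \<ge> 2" and l1: "l \<ge> 1"
    and alpha_inj: "inj_on \<alpha> {1..r}"
    and m_inj: "inj_on m {1..l}"
    and m_nz: "\<forall>s \<in> {1..l}. m s \<noteq> 0"
    and m_cond: "\<forall>s \<in> {1..l}. \<forall>t \<in> {1..l}. \<forall>i \<in> {1..r}. \<forall>j \<in> {1..r}. \<forall>k \<in> {1..r}.
                   i \<noteq> j \<and> i \<noteq> k \<and> j \<noteq> k \<longrightarrow> m s * (\<alpha> k - \<alpha> i) \<noteq> m t * (\<alpha> k - \<alpha> j)"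
    and ij: "i \<in> {1..r}" "j \<in> {1..r}" "i \<noteq> j"
    and s: "s \<in> {1..l}"
  shows "\<not> (\<exists>v1 v2 v3 v4. distinct [v1, v2, v3, v4] \<and>
             color_adj \<alpha> r m s i j v1 v2 \<and> color_adj \<alpha> r m s i j v2 v3 \<and>
             color_adj \<alpha> r m s i j v3 v4 \<and> color_adj \<alpha> r m s i j v4 v1)"
proof
  assume "\<exists>v1 v2 v3 v4. distinct [v1, v2, v3, v4] \<and>
             color_adj \<alpha> r m s i j v1 v2 \<and> color_adj \<alpha> r m s i j v2 v3 \<and>
             color_adj \<alpha> r m s i j v3 v4 \<and> color_adj \<alpha> r m s i j v4 v1"
  then obtain v1 v2 v3 v4 where d: "distinct [v1, v2, v3, v4]"
    and a12: "P \<alpha> m s i j v1 v2 \<or> P \<alpha> m s i j v2 v1"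
    and a23: "P \<alpha> m s i j v2 v3 \<or> P \<alpha> m s i j v3 v2"
    and a34: "P \<alpha> m s i j v3 v4 \<or> P \<alpha> m s i j v4 v3"
    and a41: "P \<alpha> m s i j v4 v1 \<or> P \<alpha> m s i j v1 v4"
    using adj_P by metis
  have two: "(2::'a) \<noteq> 0" using two_nz q_odd_prime_power by blast
  have "\<alpha> j \<noteq> \<alpha> i" using alpha_inj ij by (metis inj_on_eq_iff)
  hence c: "(\<alpha> j - \<alpha> i) * m s \<noteq> 0" using m_nz s by simp
  show False
  proof (cases "snd (snd v1) = i")
    case True
    hence p: "P \<alpha> m s i j v1 v2" "P \<alpha> m s i j v3 v2" "P \<alpha> m s i j v3 v4" "P \<alpha> m s i j v1 v4"
      using a12 a23 a34 a41 ij(3) unfolding P_def by auto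
    have "v2 = v4" using no_c4[OF c two p(1) p(4) p(2) p(3)] d by simp
    thus False using d by simp
  next
    case False
    hence p: "P \<alpha> m s i j v2 v1" "P \<alpha> m s i j v2 v3" "P \<alpha> m s i j v4 v3" "P \<alpha> m s i j v4 v1"
      using a12 a23 a34 a41 ij(3) unfolding P_def by auto
    have "v1 = v3" using no_c4[OF c two p(1) p(2) p(4) p(3)] d by simp
    thus False using d by simp
  qed
qed

end
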